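(* For all $f\in C([0,1])$ and $g\in C([4,5])$, $$\|ME_{2,1}(f,g)\|_{L^2(\mathbb{R}^2)}\lesssim\|f\|_{L^2}\|g\|_{L^2}.$$
   Context: Let $\varphi^1,\varphi^2\in C_c^\infty(\mathbb{R})$ with $\varphi^1\equiv1$ on $[0,1]$, $\varphi^2\equiv1$ on $[4,5]$, each supported in a small neighborhood of the respective interval. For $n,m\in\mathbb{Z}$ put $\varphi^j_{n,m}(x)=\varphi^j(x)e^{2\pi inx}e^{2\pi imx^2}$; $\chi_n$ denotes the indicator of $[n,n+1)$. Define $ME_{2,1}(f,g)(x,t)=\sum_{(n,m)\in\mathbb{Z}^2}\langle f,\varphi^1_{n,m}\rangle\langle g,\varphi^2_{n,m}\rangle\chi_n(x)\chi_m(t)$, with $\langle u,v\rangle=\int u\bar v$. *)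

theory Defs
  imports "HOL-Analysis.Analysis"
begin

definition smooth_cc :: "(real \<Rightarrow> complex) \<Rightarrow> bool" where
  "smooth_cc \<phi> \<longleftrightarrow>
     (\<exists>D :: nat \<Rightarrow> real \<Rightarrow> complex. D 0 = \<phi> \<and>
         (\<forall>k x. (D k has_vector_derivative D (Suc k) x) (at x))) \<and>
     (\<exists>a b. \<forall>x. x \<notin> {a..b} \<longrightarrow> \<phi> x = 0)"

definition modul :: "(real \<Rightarrow> complex) \<Rightarrow> int \<Rightarrow> int \<Rightarrow> real \<Rightarrow> complex" where
  "modul \<phi> n m x = \<phi> x * exp (2 * pi * \<i> * of_real (of_int n * x))
                         * exp (2 * pi * \<i> * of_real (of_int m * x^2))"

text \<open>L^2 pairing <u,v> = int u conj(v), for u a function supported on [a,b]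
  (u in C([a,b]) extended by zero).\<close>
definition pair_on :: "real \<Rightarrow> real \<Rightarrow> (real \<Rightarrow> complex) \<Rightarrow> (real \<Rightarrow> complex) \<Rightarrow> complex" where
  "pair_on a b u v = integral {a..b} (\<lambda>x. u x * cnj (v x))"

definition chi :: "int \<Rightarrow> real \<Rightarrow> complex" where
  "chi n x = (if of_int n \<le> x \<and> x < of_int n + 1 then 1 else 0)"

definition ME21 :: "(real \<Rightarrow> complex) \<Rightarrow> (real \<Rightarrow> complex) \<Rightarrow> (real \<Rightarrow> complex) \<Rightarrow> (real \<Rightarrow> complex)
                     \<Rightarrow> real \<times> real \<Rightarrow> complex" where
  "ME21 \<phi>1 \<phi>2 f g = (\<lambda>(x, t). \<Sum>\<^sub>\<infinity>(n, m) \<in> (UNIV :: (int \<times> int) set).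
      pair_on 0 1 f (modul \<phi>1 n m) * pair_on 4 5 g (modul \<phi>2 n m) * chi n x * chi m t)"

definition L2_on :: "real \<Rightarrow> real \<Rightarrow> (real \<Rightarrow> complex) \<Rightarrow> real" where
  "L2_on a b u = sqrt (integral {a..b} (\<lambda>x. (cmod (u x))^2))"

definition L2_R2 :: "(real \<times> real \<Rightarrow> complex) \<Rightarrow> ennreal" where
  "L2_R2 h = (let I = (\<integral>\<^sup>+ z. ennreal ((cmod (h z))^2) \<partial>lborel)
              in if I = \<infinity> then \<infinity> else ennreal (sqrt (enn2real I)))"

end

theory Submission
  imports Defs
begin


definition ex :: "real \<Rightarrow> complex" where
  "ex t = exp (2 * pi * \<i> * complex_of_real t)"

lemma ex_add: "ex (a + b) = ex a * ex b"
  unfolding ex_def by (simp add: distrib_left exp_add)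

lemma ex_minus: "ex (- a) = cnj (ex a)"
  unfolding ex_def exp_cnj by simp

lemma norm_ex[simp]: "cmod (ex t) = 1"
  unfolding ex_def by (simp add: norm_exp_eq_Re)

lemma ex_int: "ex (of_int k) = 1"
  unfolding ex_def exp_eq_1 by (auto intro!: exI[of _ k])

lemma ex_mult_cnj: "ex a * cnj (ex a) = 1"
  by (metis complex_norm_square mult.commute norm_ex of_real_1 one_power2)

lemma continuous_ex: "continuous_on UNIV ex"
  unfolding ex_def by (intro continuous_intros)

lemma ex_measurable[measurable]: "ex \<in> borel_measurable borel"
  using continuous_ex borel_measurable_continuous_onI by blast

lemma has_derivative_ex:
  assumes "(\<psi> has_real_derivative d) (at x)"
  shows "((\<lambda>x. ex (c * \<psi> x)) has_vector_derivative (2 * pi * \<i> * c * d) * ex (c * \<psi> x)) (at x)"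
proof -
  have 1: "((\<lambda>x. complex_of_real (c * \<psi> x)) has_vector_derivative of_real (c * d)) (at x)"
    using assms by (intro has_vector_derivative_of_real DERIV_cmult)
  have 2: "((\<lambda>z. exp (2 * pi * \<i> * z)) has_field_derivative (2 * pi * \<i>) * exp (2 * pi * \<i> * complex_of_real (c * \<psi> x))) (at (complex_of_real (c * \<psi> x)))"
    by (auto intro!: derivative_eq_intros)
  have "((\<lambda>z. exp (2 * pi * \<i> * z)) \<circ> (\<lambda>x. complex_of_real (c * \<psi> x)) has_vector_derivative
       of_real (c * d) * ((2 * pi * \<i>) * exp (2 * pi * \<i> * complex_of_real (c * \<psi> x)))) (at x)"
    by (rule field_vector_diff_chain_at[OF 1 2])
  then show ?thesis unfolding ex_def o_def by (simp add: ac_simps)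
qed


lemma integrable_bounded_support:
  fixes \<phi> :: "real \<Rightarrow> 'a::{banach, second_countable_topology}"
  assumes "\<phi> \<in> borel_measurable lborel" "\<And>x. norm (\<phi> x) \<le> C" "\<And>x. x \<notin> {a..b} \<Longrightarrow> \<phi> x = 0"
  shows "integrable lborel \<phi>"
proof (rule Bochner_Integration.integrable_bound)
  show "integrable lborel (\<lambda>x. C * indicator {a..b} x :: real)"
    by (intro integrable_mult_right integrable_real_indicator) (auto simp: emeasure_lborel_Icc_eq)
  show "AE x in lborel. norm (\<phi> x) \<le> norm (C * indicator {a..b} x :: real)"
    using assms(2,3) by (auto intro!: AE_I2 split: split_indicator)
       (metis norm_ge_zero order_trans abs_ge_self)+
qed (use assms in auto)

lemma ex_ortho:
  fixes \<psi> \<psi>' :: "real \<Rightarrow> real"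
  assumes deriv: "\<And>x. (\<psi> has_real_derivative \<psi>' x) (at x)" and cont: "continuous_on UNIV \<psi>'"
    and ab: "\<alpha> \<le> \<beta>" and N: "\<psi> \<beta> = \<psi> \<alpha> + real N"
  shows "(LINT x|lborel. indicator {\<alpha>..\<beta>} x *\<^sub>R (of_real (\<psi>' x) * ex (of_int j * \<psi> x))) = (if j = 0 then of_nat N else 0)"
proof -
  define f where "f x = of_real (\<psi>' x) * ex (of_int j * \<psi> x)" for x
  have contpsi: "continuous_on UNIV \<psi>"
    using deriv by (meson DERIV_isCont continuous_at_imp_continuous_on)
  have cf: "continuous_on {\<alpha>..\<beta>} f"
    unfolding f_def
    by (intro continuous_intros continuous_on_compose2[OF continuous_ex] continuous_on_subset[OF cont]
        continuous_on_subset[OF contpsi]) auto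
  have "(LINT x|lborel. indicator {\<alpha>..\<beta>} x *\<^sub>R f x) = integral {\<alpha>..\<beta>} f"
    using set_borel_integral_eq_integral(2)[OF borel_integrable_atLeastAtMost'[OF cf]]
    by (simp add: set_lebesgue_integral_def)
  also have "\<dots> = (if j = 0 then of_nat N else 0)"
  proof (cases "j = 0")
    case True
    have "(f has_integral (of_real (\<psi> \<beta>) - of_real (\<psi> \<alpha>))) {\<alpha>..\<beta>}"
    proof (rule fundamental_theorem_of_calculus[OF ab], rule has_vector_derivative_at_within)
      fix x
      show "((\<lambda>x. complex_of_real (\<psi> x)) has_vector_derivative f x) (at x)"
        unfolding f_def using True by (simp add: ex_def has_vector_derivative_of_real[OF deriv])
    qed
    then show ?thesis using True N by (simp add: integral_unique)
  next
    case False
    define \<Phi> where "\<Phi> x = ex (of_int j * \<psi> x) / (2 * pi * \<i> * of_int j)" for x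
    have "(f has_integral (\<Phi> \<beta> - \<Phi> \<alpha>)) {\<alpha>..\<beta>}"
    proof (rule fundamental_theorem_of_calculus[OF ab], rule has_vector_derivative_at_within)
      fix x
      have "((\<lambda>x. ex (of_int j * \<psi> x)) has_vector_derivative (2 * pi * \<i> * of_int j * \<psi>' x) * ex (of_int j * \<psi> x)) (at x)"
        using has_derivative_ex[OF deriv, where c="of_int j"] by simp
      then have "(\<Phi> has_vector_derivative ((2 * pi * \<i> * of_int j * \<psi>' x) * ex (of_int j * \<psi> x)) / (2 * pi * \<i> * of_int j)) (at x)"
        unfolding \<Phi>_def by (intro has_vector_derivative_divide)
      then show "(\<Phi> has_vector_derivative f x) (at x)"
        unfolding f_def using False by (simp add: field_simps)
    qed
    moreover have "\<Phi> \<beta> = \<Phi> \<alpha>"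
    proof -
      have "ex (of_int j * \<psi> \<beta>) = ex (of_int j * \<psi> \<alpha>) * ex (of_int (j * int N))"
        using N by (simp add: ex_add[symmetric] distrib_left)
      then show ?thesis unfolding \<Phi>_def ex_int by simp
    qed
    ultimately show ?thesis using False by (simp add: integral_unique)
  qed
  finally show ?thesis unfolding f_def .
qed


lemma mult_cnj_sq: "z * cnj z = complex_of_real ((cmod z)\<^sup>2)"
  by (simp only: complex_norm_square)

lemma cnj_mult_sq: "cnj z * z = complex_of_real ((cmod z)\<^sup>2)"
  by (simp only: complex_norm_square mult.commute)

lemma amgm_aux:
  fixes p q w d :: real and N :: nat
  assumes "p \<ge> 0" "q \<ge> 0" "d > 0" "w \<ge> d" "N > 0"
  shows "p * q \<le> real N / (2 * d) * p\<^sup>2 + 1 / (2 * real N) * (w * q\<^sup>2)"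
proof -
  have w: "w > 0" using assms by simp
  have Np: "real N > 0" using assms by simp
  have "0 \<le> (real N * p - w * q)\<^sup>2" by simp
  then have "2 * real N * w * (p * q) \<le> (real N * p)\<^sup>2 + (w * q)\<^sup>2"
    by (simp add: power2_eq_square algebra_simps)
  then have h0: "p * q \<le> ((real N * p)\<^sup>2 + (w * q)\<^sup>2) / (2 * real N * w)"
    using w Np by (subst pos_le_divide_eq) (auto simp: mult.commute)
  have eq: "((real N * p)\<^sup>2 + (w * q)\<^sup>2) / (2 * real N * w) = real N / (2 * w) * p\<^sup>2 + 1 / (2 * real N) * (w * q\<^sup>2)"
    using w Np by (simp add: field_simps power2_eq_square)
  have h2: "real N / (2 * w) * p\<^sup>2 \<le> real N / (2 * d) * p\<^sup>2"
    using assms w by (intro mult_right_mono divide_left_mono) (auto intro: mult_pos_pos)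
  from h0 h2 show ?thesis unfolding eq by linarith
qed

lemma bessel_gen:
  fixes h :: "real \<Rightarrow> complex" and \<psi> \<psi>' :: "real \<Rightarrow> real"
  assumes M: "finite M" and ab: "\<alpha> \<le> \<beta>"
    and deriv: "\<And>x. (\<psi> has_real_derivative \<psi>' x) (at x)" and cont: "continuous_on UNIV \<psi>'"
    and N: "\<psi> \<beta> = \<psi> \<alpha> + real N" "N > 0"
    and dpos: "\<delta> > 0" and dle: "\<And>x. x \<in> {\<alpha>..\<beta>} \<Longrightarrow> \<delta> \<le> \<psi>' x"
    and hm: "h \<in> borel_measurable lborel" and hb: "\<And>x. cmod (h x) \<le> B"
    and supp: "\<And>x. x \<notin> {\<alpha>..\<beta>} \<Longrightarrow> h x = 0"
  shows "(\<Sum>m\<in>M. (cmod (LINT x|lborel. h x * ex (- (of_int m * \<psi> x))))\<^sup>2)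
           \<le> real N / \<delta> * (LINT x|lborel. (cmod (h x))\<^sup>2)"
proof -
  define c where "c m = (LINT x|lborel. h x * ex (- (of_int m * \<psi> x)))" for m :: int
  define D where "D x = (\<Sum>m\<in>M. c m * ex (of_int m * \<psi> x))" for x
  define S where "S = (\<Sum>m\<in>M. (cmod (c m))\<^sup>2)"
  define A where "A = (LINT x|lborel. (cmod (h x))\<^sup>2)"
  define BD where "BD = (\<Sum>m\<in>M. cmod (c m))"
  have contpsi: "continuous_on UNIV \<psi>"
    using deriv by (meson DERIV_isCont continuous_at_imp_continuous_on)
  have [measurable]: "\<psi> \<in> borel_measurable borel" "\<psi>' \<in> borel_measurable borel"
    using contpsi cont borel_measurable_continuous_onI by blast+
  have [measurable]: "h \<in> borel_measurable borel" using hm by simp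
  have contD: "continuous_on UNIV D"
    unfolding D_def
    by (intro continuous_intros continuous_on_compose2[OF continuous_ex] contpsi) auto
  have [measurable]: "D \<in> borel_measurable borel"
    using contD borel_measurable_continuous_onI by blast
  have bD: "cmod (D x) \<le> BD" for x
    unfolding D_def BD_def by (rule order_trans[OF norm_sum]) (simp add: norm_mult)
  have B0: "0 \<le> B" using hb[of 0] norm_ge_zero order_trans by blast
  have int_hex: "integrable lborel (\<lambda>x. h x * ex (- (of_int m * \<psi> x)))" for m
    by (rule integrable_bounded_support[where C=B and a=\<alpha> and b=\<beta>])
       (auto simp: norm_mult hb supp)
  have cnjD: "cnj (D x) = (\<Sum>m\<in>M. cnj (c m) * ex (- (of_int m * \<psi> x)))" for x
    unfolding D_def by (simp add: ex_minus)
  have S1: "complex_of_real S = (LINT x|lborel. h x * cnj (D x))"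
  proof -
    have "(LINT x|lborel. h x * cnj (D x)) = (LINT x|lborel. (\<Sum>m\<in>M. cnj (c m) * (h x * ex (- (of_int m * \<psi> x)))))"
      unfolding cnjD by (simp add: sum_distrib_left ac_simps)
    also have "\<dots> = (\<Sum>m\<in>M. cnj (c m) * (LINT x|lborel. h x * ex (- (of_int m * \<psi> x))))"
      by (subst Bochner_Integration.integral_sum) (simp_all add: int_hex integral_mult_right_zero)
    also have "\<dots> = (\<Sum>m\<in>M. cnj (c m) * c m)"
      by (simp add: c_def)
    also have "\<dots> = complex_of_real S"
      unfolding S_def of_real_sum by (intro sum.cong refl) (simp only: cnj_mult_sq)
    finally show ?thesis by simp
  qed
  have S2: "(LINT x|lborel. indicator {\<alpha>..\<beta>} x * \<psi>' x * (cmod (D x))\<^sup>2) = real N * S"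
  proof -
    have cE: "continuous_on {\<alpha>..\<beta>} (\<lambda>x. of_real (\<psi>' x) * ex (of_int j * \<psi> x))" for j
      by (intro continuous_intros continuous_on_subset[OF cont]
          continuous_on_compose2[OF continuous_ex] continuous_on_subset[OF contpsi]) auto
    define E where "E j x = indicator {\<alpha>..\<beta>} x *\<^sub>R (of_real (\<psi>' x) * ex (of_int j * \<psi> x))" for j x
    have intE: "integrable lborel (E j)" for j
      using borel_integrable_atLeastAtMost'[OF cE[of j]] unfolding set_integrable_def E_def .
    have pt: "complex_of_real (indicator {\<alpha>..\<beta>} x * \<psi>' x * (cmod (D x))\<^sup>2) =
        (\<Sum>m\<in>M. \<Sum>k\<in>M. (c m * cnj (c k)) * E (m - k) x)" for x
    proof -
      have "D x * cnj (D x) = (\<Sum>m\<in>M. \<Sum>k\<in>M. (c m * ex (of_int m * \<psi> x)) * (cnj (c k) * ex (- (of_int k * \<psi> x))))"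
        unfolding cnjD unfolding D_def by (rule sum_product)
      also have "\<dots> = (\<Sum>m\<in>M. \<Sum>k\<in>M. (c m * cnj (c k)) * ex (of_int (m - k) * \<psi> x))"
      proof (intro sum.cong refl)
        fix m k
        have e: "ex (of_int m * \<psi> x) * ex (- (of_int k * \<psi> x)) = ex (of_int (m - k) * \<psi> x)"
          by (simp add: ex_add[symmetric] left_diff_distrib)
        have "c m * ex (of_int m * \<psi> x) * (cnj (c k) * ex (- (of_int k * \<psi> x))) =
              c m * cnj (c k) * (ex (of_int m * \<psi> x) * ex (- (of_int k * \<psi> x)))"
          by (simp only: mult.assoc mult.left_commute)
        then show "c m * ex (of_int m * \<psi> x) * (cnj (c k) * ex (- (of_int k * \<psi> x))) =
              c m * cnj (c k) * ex (of_int (m - k) * \<psi> x)"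
          by (simp only: e)
      qed
      finally have 1: "D x * cnj (D x) = \<dots>" .
      have "complex_of_real (indicator {\<alpha>..\<beta>} x * \<psi>' x * (cmod (D x))\<^sup>2)
          = indicator {\<alpha>..\<beta>} x *\<^sub>R (of_real (\<psi>' x) * (D x * cnj (D x)))"
        by (simp only: mult_cnj_sq scaleR_conv_of_real of_real_mult mult.assoc)
      also have "\<dots> = (\<Sum>m\<in>M. \<Sum>k\<in>M. (c m * cnj (c k)) * E (m - k) x)"
        unfolding 1 E_def by (simp only: sum_distrib_left scaleR_sum_right scaleR_conv_of_real mult_ac)
      finally show ?thesis .
    qed
    have "complex_of_real (LINT x|lborel. indicator {\<alpha>..\<beta>} x * \<psi>' x * (cmod (D x))\<^sup>2)
        = (LINT x|lborel. (\<Sum>m\<in>M. \<Sum>k\<in>M. (c m * cnj (c k)) * E (m - k) x))"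
      by (simp only: integral_complex_of_real[symmetric] pt)
    also have "\<dots> = (\<Sum>m\<in>M. \<Sum>k\<in>M. (c m * cnj (c k)) * (LINT x|lborel. E (m - k) x))"
    proof -
      have i2: "integrable lborel (\<lambda>x. (\<Sum>k\<in>M. (c m * cnj (c k)) * E (m - k) x))" for m
        by (intro Bochner_Integration.integrable_sum integrable_mult_right intE)
      have "(LINT x|lborel. (\<Sum>m\<in>M. \<Sum>k\<in>M. (c m * cnj (c k)) * E (m - k) x)) =
            (\<Sum>m\<in>M. integral\<^sup>L lborel (\<lambda>x. (\<Sum>k\<in>M. (c m * cnj (c k)) * E (m - k) x)))"
        by (rule Bochner_Integration.integral_sum) (rule i2)
      also have "\<dots> = (\<Sum>m\<in>M. \<Sum>k\<in>M. integral\<^sup>L lborel (\<lambda>x. (c m * cnj (c k)) * E (m - k) x))"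
        by (intro sum.cong refl Bochner_Integration.integral_sum integrable_mult_right intE)
      also have "\<dots> = (\<Sum>m\<in>M. \<Sum>k\<in>M. (c m * cnj (c k)) * (LINT x|lborel. E (m - k) x))"
        by (simp only: integral_mult_right_zero)
      finally show ?thesis .
    qed
    also have "\<dots> = (\<Sum>m\<in>M. \<Sum>k\<in>M. (c m * cnj (c k)) * (if m - k = 0 then of_nat N else 0))"
      unfolding E_def by (simp only: ex_ortho[OF deriv cont ab N(1)])
    also have "\<dots> = (\<Sum>m\<in>M. c m * cnj (c m) * of_nat N)"
    proof (rule sum.cong[OF refl])
      fix m assume m: "m \<in> M"
      have "(\<Sum>k\<in>M. (c m * cnj (c k)) * (if m - k = 0 then of_nat N else 0)) =
            (c m * cnj (c m)) * (if m - m = 0 then of_nat N else 0) +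
            (\<Sum>k\<in>M - {m}. (c m * cnj (c k)) * (if m - k = 0 then of_nat N else 0))"
        by (rule sum.remove[OF M m])
      also have "(\<Sum>k\<in>M - {m}. (c m * cnj (c k)) * (if m - k = 0 then of_nat N else 0)) = 0"
        by (rule sum.neutral) auto
      finally show "(\<Sum>k\<in>M. (c m * cnj (c k)) * (if m - k = 0 then of_nat N else 0)) = c m * cnj (c m) * of_nat N"
        by simp
    qed
    also have "\<dots> = complex_of_real (real N * S)"
      unfolding S_def of_real_mult of_real_sum sum_distrib_left
      by (intro sum.cong refl) (simp only: mult_cnj_sq of_real_of_nat_eq mult.commute)
    finally show ?thesis by (simp only: of_real_eq_iff)
  qed
  have int_hD: "integrable lborel (\<lambda>x. cmod (h x) * cmod (D x))"
    by (rule integrable_bounded_support[where C="B * BD" and a=\<alpha> and b=\<beta>])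
       (auto simp: supp intro!: mult_mono hb bD B0)
  have int_h2: "integrable lborel (\<lambda>x. (cmod (h x))\<^sup>2)"
    by (rule integrable_bounded_support[where C="B * B" and a=\<alpha> and b=\<beta>])
       (auto simp: supp power2_eq_square intro!: mult_mono hb B0)
  have cD2: "continuous_on {\<alpha>..\<beta>} (\<lambda>x. \<psi>' x * (cmod (D x))\<^sup>2)"
    by (intro continuous_intros continuous_on_subset[OF cont] continuous_on_subset[OF contD]) auto
  have int_D2: "integrable lborel (\<lambda>x. indicator {\<alpha>..\<beta>} x * \<psi>' x * (cmod (D x))\<^sup>2)"
    using borel_integrable_atLeastAtMost'[OF cD2] by (simp add: set_integrable_def mult.assoc)
  have S0: "S \<ge> 0" unfolding S_def by (simp add: sum_nonneg)
  have "S = cmod (complex_of_real S)"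
    using S0 by simp
  also have "\<dots> \<le> (LINT x|lborel. cmod (h x * cnj (D x)))"
    unfolding S1 by (rule integral_norm_bound)
  also have "\<dots> = (LINT x|lborel. cmod (h x) * cmod (D x))"
    by (simp add: norm_mult)
  also have "\<dots> \<le> (LINT x|lborel. real N / (2 * \<delta>) * (cmod (h x))\<^sup>2 +
                    1 / (2 * real N) * (indicator {\<alpha>..\<beta>} x * \<psi>' x * (cmod (D x))\<^sup>2))"
  proof (rule integral_mono[OF int_hD])
    show "integrable lborel (\<lambda>x. real N / (2 * \<delta>) * (cmod (h x))\<^sup>2 +
                    1 / (2 * real N) * (indicator {\<alpha>..\<beta>} x * \<psi>' x * (cmod (D x))\<^sup>2))"
      using int_h2 int_D2 by auto
    fix x
    show "cmod (h x) * cmod (D x) \<le> real N / (2 * \<delta>) * (cmod (h x))\<^sup>2 +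
                    1 / (2 * real N) * (indicator {\<alpha>..\<beta>} x * \<psi>' x * (cmod (D x))\<^sup>2)"
    proof (cases "x \<in> {\<alpha>..\<beta>}")
      case True
      then show ?thesis using amgm_aux[of "cmod (h x)" "cmod (D x)" \<delta> "\<psi>' x" N] dpos dle N(2) by simp
    next
      case False
      then show ?thesis by (simp add: supp)
    qed
  qed
  also have "\<dots> = real N / (2 * \<delta>) * A + 1 / (2 * real N) * (real N * S)"
    using int_h2 int_D2 by (simp add: A_def S2)
  finally have "S \<le> real N / (2 * \<delta>) * A + S / 2" using N(2) by simp
  then have "S \<le> real N / \<delta> * A" by (simp add: field_simps)
  then show ?thesis unfolding S_def c_def A_def .
qed



lemma count_int_le:
  fixes c :: "int \<Rightarrow> real"
  assumes nn: "\<And>n. c n \<ge> 0" and le: "\<And>M. finite M \<Longrightarrow> (\<Sum>n\<in>M. c n) \<le> B"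
  shows "(\<integral>\<^sup>+n. ennreal (c n) \<partial>count_space UNIV) \<le> ennreal B"
proof -
  define f where "f k n = ennreal (c n) * indicator {- int k..int k} n" for k :: nat and n
  have inc: "incseq f"
    unfolding f_def by (auto simp: incseq_def le_fun_def split: split_indicator)
  have sup: "(SUP k. f k n) = ennreal (c n)" for n
  proof (rule antisym)
    show "(SUP k. f k n) \<le> ennreal (c n)"
      by (rule SUP_least) (auto simp: f_def split: split_indicator)
    show "ennreal (c n) \<le> (SUP k. f k n)"
      by (rule SUP_upper2[where i="nat \<bar>n\<bar>"]) (auto simp: f_def split: split_indicator)
  qed
  have "(\<integral>\<^sup>+n. ennreal (c n) \<partial>count_space UNIV) = (\<integral>\<^sup>+n. (SUP k. f k n) \<partial>count_space UNIV)"
    by (simp add: sup)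
  also have "\<dots> = (SUP k. integral\<^sup>N (count_space UNIV) (f k))"
    by (rule nn_integral_monotone_convergence_SUP[OF inc]) simp
  also have "\<dots> \<le> ennreal B"
  proof (rule SUP_least)
    fix k
    have "integral\<^sup>N (count_space UNIV) (f k) = (\<Sum>n\<in>{- int k..int k}. ennreal (c n))"
      unfolding f_def by (subst nn_integral_indicator_finite) auto
    also have "\<dots> = ennreal (\<Sum>n\<in>{- int k..int k}. c n)"
      using nn by (simp add: sum_ennreal)
    also have "\<dots> \<le> ennreal B"
      using le[of "{- int k..int k}"] by (intro ennreal_leI) auto
    finally show "integral\<^sup>N (count_space UNIV) (f k) \<le> ennreal B" .
  qed
  finally show ?thesis .
qed


definition "Psi F G m u x = F x * G (u - x) * ex (- (of_int m * (x\<^sup>2 + (u - x)\<^sup>2)))"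
definition "Kf F G m u = (LINT x|lborel. Psi F G m u x)"
definition "ca F n m = (LINT x|lborel. F x * ex (- (of_int n * x + of_int m * x\<^sup>2)))"

context
  fixes F G :: "real \<Rightarrow> complex" and BF BG :: real
  assumes Fm[measurable]: "F \<in> borel_measurable borel" and Gm[measurable]: "G \<in> borel_measurable borel"
    and FB: "\<And>x. cmod (F x) \<le> BF" and GB: "\<And>x. cmod (G x) \<le> BG"
    and Fs: "\<And>x. x \<notin> {0..1} \<Longrightarrow> F x = 0" and Gs: "\<And>x. x \<notin> {4..5} \<Longrightarrow> G x = 0"
begin

lemma BF0: "BF \<ge> 0" using FB[of 0] norm_ge_zero order_trans by blast
lemma BG0: "BG \<ge> 0" using GB[of 0] norm_ge_zero order_trans by blast

lemma Psi_meas[measurable]: "(\<lambda>(x, u). Psi F G m u x) \<in> borel_measurable (lborel \<Otimes>\<^sub>M lborel)"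
  unfolding Psi_def by measurable

lemma Psi_meas'[measurable]: "(\<lambda>(u, x). Psi F G m u x) \<in> borel_measurable (lborel \<Otimes>\<^sub>M lborel)"
  unfolding Psi_def by measurable

lemma Psi_zero: "x \<notin> {0..1} \<or> u \<notin> {4..6} \<Longrightarrow> Psi F G m u x = 0"
proof -
  assume a: "x \<notin> {0..1} \<or> u \<notin> {4..6}"
  show ?thesis
  proof (cases "x \<in> {0..1}")
    case True
    then have "u - x \<notin> {4..5}" using a by auto
    then show ?thesis by (simp add: Psi_def Gs)
  next
    case False
    then show ?thesis by (simp add: Psi_def Fs)
  qed
qed

lemma Psi_bound: "cmod (Psi F G m u x) \<le> BF * BG"
  unfolding Psi_def by (simp add: norm_mult) (intro mult_mono FB GB BF0 BG0 norm_ge_zero)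

lemma Kf_meas[measurable]: "Kf F G m \<in> borel_measurable borel"
proof -
  have "(\<lambda>u. LINT x|lborel. Psi F G m u x) \<in> borel_measurable lborel"
    by (rule lborel.borel_measurable_lebesgue_integral) (rule Psi_meas')
  then show ?thesis unfolding Kf_def[abs_def] by simp
qed

lemma Kf_zero: "u \<notin> {4..6} \<Longrightarrow> Kf F G m u = 0"
proof -
  assume "u \<notin> {4..6}"
  then have "Psi F G m u = (\<lambda>x. 0)" by (intro ext Psi_zero) simp
  then show ?thesis unfolding Kf_def by simp
qed

lemma Kf_bound: "cmod (Kf F G m u) \<le> BF * BG"
proof -
  have int: "integrable lborel (\<lambda>x::real. BF * BG * indicator {0..1} x :: real)"
    by (intro integrable_mult_right integrable_real_indicator) (auto simp: emeasure_lborel_Icc_eq)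
  have "cmod (Kf F G m u) \<le> (LINT x|lborel. cmod (Psi F G m u x))"
    unfolding Kf_def by (rule integral_norm_bound)
  also have "\<dots> \<le> (LINT x::real|lborel. BF * BG * indicator {0..1} x)"
  proof (rule Bochner_Integration.integral_mono'[OF int])
    fix x :: real
    show "cmod (Psi F G m u x) \<le> BF * BG * indicator {0..1} x"
      using Psi_bound[of m u x] Psi_zero[of x u m] by (auto split: split_indicator)
    show "0 \<le> BF * BG * indicator {0..1} x"
      using BF0 BG0 by (auto split: split_indicator)
  qed
  also have "\<dots> = BF * BG" by simp
  finally show ?thesis .
qed


lemma Psi_prod_integrable:
  "integrable (lborel \<Otimes>\<^sub>M lborel) (\<lambda>(x, u). Psi F G m u x * ex (- (of_int n * u)))"
proof (rule Bochner_Integration.integrable_bound)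
  show "integrable (lborel \<Otimes>\<^sub>M lborel) (\<lambda>z::real \<times> real. BF * BG * indicator ({0..1} \<times> {4..6}) z :: real)"
    by (intro integrable_mult_right integrable_real_indicator)
       (auto simp: lborel.emeasure_pair_measure_Times ennreal_mult_less_top)
  show "(\<lambda>(x, u). Psi F G m u x * ex (- (of_int n * u))) \<in> borel_measurable (lborel \<Otimes>\<^sub>M lborel)"
    by measurable
  show "AE z in lborel \<Otimes>\<^sub>M lborel. norm ((\<lambda>(x, u). Psi F G m u x * ex (- (of_int n * u))) z)
          \<le> norm (BF * BG * indicator ({0..1} \<times> {4..6}) z :: real)"
  proof (rule AE_I2, clarify)
    fix x u :: real
    show "norm (Psi F G m u x * ex (- (of_int n * u))) \<le> norm (BF * BG * indicator ({0..1} \<times> {4..6}) (x, u) :: real)"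
      using Psi_bound[of m u x] Psi_zero[of x u m] BF0 BG0
      by (auto simp: norm_mult split: split_indicator)
  qed
qed

lemma ca_prod: "ca F n m * ca G n m = (LINT u|lborel. Kf F G m u * ex (- (of_int n * u)))"
proof -
  define A where "A x = F x * ex (- (of_int n * x + of_int m * x\<^sup>2))" for x
  define B where "B x = G x * ex (- (of_int n * x + of_int m * x\<^sup>2))" for x
  have trans: "(LINT y|lborel. A x * B y) = (LINT u|lborel. A x * B (u - x))" for x
    using lborel_integral_real_affine[where c=1 and t="-x" and f="\<lambda>y. A x * B y"] by simp
  have eq: "A x * B (u - x) = Psi F G m u x * ex (- (of_int n * u))" for x u
  proof -
    have e: "ex (- (of_int n * x + of_int m * x\<^sup>2)) * ex (- (of_int n * (u - x) + of_int m * (u - x)\<^sup>2))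
           = ex (- (of_int m * (x\<^sup>2 + (u - x)\<^sup>2))) * ex (- (of_int n * u))"
      unfolding ex_add[symmetric] by (intro arg_cong[where f=ex]) (simp add: algebra_simps)
    have "A x * B (u - x) = (F x * G (u - x)) * (ex (- (of_int n * x + of_int m * x\<^sup>2)) * ex (- (of_int n * (u - x) + of_int m * (u - x)\<^sup>2)))"
      unfolding A_def B_def by (simp only: mult_ac)
    also have "\<dots> = (F x * G (u - x)) * (ex (- (of_int m * (x\<^sup>2 + (u - x)\<^sup>2))) * ex (- (of_int n * u)))"
      by (simp only: e)
    also have "\<dots> = Psi F G m u x * ex (- (of_int n * u))"
      unfolding Psi_def by (simp only: mult_ac)
    finally show ?thesis .
  qed
  have "ca F n m * ca G n m = (LINT x|lborel. A x) * (LINT y|lborel. B y)"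
    unfolding ca_def A_def B_def ..
  also have "\<dots> = (LINT x|lborel. A x * (LINT y|lborel. B y))"
    by (simp only: integral_mult_left_zero)
  also have "\<dots> = (LINT x|lborel. (LINT y|lborel. A x * B y))"
    by (simp only: integral_mult_right_zero)
  also have "\<dots> = (LINT x|lborel. (LINT u|lborel. Psi F G m u x * ex (- (of_int n * u))))"
    by (simp only: trans eq)
  also have "\<dots> = (LINT u|lborel. (LINT x|lborel. Psi F G m u x * ex (- (of_int n * u))))"
    by (rule lborel_pair.Fubini_integral[symmetric]) (rule Psi_prod_integrable)
  also have "\<dots> = (LINT u|lborel. Kf F G m u * ex (- (of_int n * u)))"
    unfolding Kf_def by (simp only: integral_mult_left_zero)
  finally show ?thesis .
qed

lemma sum_n_bound:
  "(\<integral>\<^sup>+n. ennreal ((cmod (ca F n m * ca G n m))\<^sup>2) \<partial>count_space UNIV)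
     \<le> ennreal (2 * (LINT u|lborel. (cmod (Kf F G m u))\<^sup>2))"
proof (rule count_int_le)
  fix M :: "int set" assume M: "finite M"
  have "(\<Sum>n\<in>M. (cmod (LINT u|lborel. Kf F G m u * ex (- (of_int n * u))))\<^sup>2)
        \<le> real 2 / 1 * (LINT u|lborel. (cmod (Kf F G m u))\<^sup>2)"
  proof (rule bessel_gen[where \<psi>="\<lambda>u. u" and \<psi>'="\<lambda>_. 1" and \<alpha>=4 and \<beta>=6 and B="BF * BG"])
    show "Kf F G m \<in> borel_measurable lborel" by simp
  qed (auto simp: M Kf_bound Kf_zero)
  then show "(\<Sum>n\<in>M. (cmod (ca F n m * ca G n m))\<^sup>2) \<le> 2 * (LINT u|lborel. (cmod (Kf F G m u))\<^sup>2)"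
    by (simp add: ca_prod)
qed simp

lemma sum_m_bound:
  "(\<integral>\<^sup>+m. ennreal ((cmod (Kf F G m u))\<^sup>2) \<partial>count_space UNIV)
     \<le> ennreal (5 / 2 * (LINT x|lborel. (cmod (F x * G (u - x)))\<^sup>2))"
proof (rule count_int_le)
  fix M :: "int set" assume M: "finite M"
  show "(\<Sum>m\<in>M. (cmod (Kf F G m u))\<^sup>2) \<le> 5 / 2 * (LINT x|lborel. (cmod (F x * G (u - x)))\<^sup>2)"
  proof (cases "u \<in> {4..6}")
    case False
    then show ?thesis by (simp add: Kf_zero)
  next
    case True
    then have u: "4 \<le> u" "u \<le> 6" by auto
    define q where "q x = x\<^sup>2 + (u - x)\<^sup>2" for x :: real
    have "\<exists>x\<ge>-10. x \<le> 0 \<and> q x = 1 + (u - 1)\<^sup>2 + 10"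
    proof (rule IVT2')
      show "q 0 \<le> 1 + (u - 1)\<^sup>2 + 10" using u by (simp add: q_def power2_eq_square algebra_simps)
      show "1 + (u - 1)\<^sup>2 + 10 \<le> q (- 10)" using u by (simp add: q_def power2_eq_square algebra_simps)
      show "continuous_on {- 10..0} q" unfolding q_def by (intro continuous_intros)
    qed simp
    then obtain x0 where x0: "x0 \<le> 0" "q x0 = 1 + (u - 1)\<^sup>2 + 10" by auto
    define h where "h x = F x * G (u - x)" for x
    have [measurable]: "h \<in> borel_measurable borel" unfolding h_def by measurable
    have "(\<Sum>m\<in>uminus ` M. (cmod (LINT x|lborel. h x * ex (- (of_int m * (- q x)))))\<^sup>2)
        \<le> real 10 / 4 * (LINT x|lborel. (cmod (h x))\<^sup>2)"
    proof (rule bessel_gen[where \<psi>="\<lambda>x. - q x" and \<psi>'="\<lambda>x. 2 * u - 4 * x" and \<alpha>=x0 and \<beta>=1 and B="BF * BG"])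
      show "finite (uminus ` M)" using M by simp
      show "x0 \<le> 1" using x0 by simp
      fix x
      show "((\<lambda>x. - q x) has_real_derivative 2 * u - 4 * x) (at x)"
        unfolding q_def by (auto intro!: derivative_eq_intros simp: algebra_simps)
    next
      show "continuous_on UNIV (\<lambda>x::real. 2 * u - 4 * x)" by (intro continuous_intros)
      show "- q 1 = - q x0 + real 10" using x0 by (simp add: q_def)
      show "h \<in> borel_measurable lborel" by simp
    next
      fix x :: real assume "x \<in> {x0..1}"
      then show "4 \<le> 2 * u - 4 * x" using u by auto
    next
      fix x show "cmod (h x) \<le> BF * BG"
        unfolding h_def norm_mult by (intro mult_mono FB GB BF0 BG0 norm_ge_zero)
    next
      fix x :: real assume "x \<notin> {x0..1}"
      then have "x \<notin> {0..1}" using x0 by auto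
      then show "h x = 0" by (simp add: h_def Fs)
    qed simp_all
    also have "(\<Sum>m\<in>uminus ` M. (cmod (LINT x|lborel. h x * ex (- (of_int m * (- q x)))))\<^sup>2)
             = (\<Sum>m\<in>M. (cmod (Kf F G m u))\<^sup>2)"
    proof (subst sum.reindex)
      show "inj_on uminus M" by (simp add: inj_on_def)
      show "(\<Sum>m\<in>M. ((\<lambda>m. (cmod (LINT x|lborel. h x * ex (- (of_int m * (- q x)))))\<^sup>2) \<circ> uminus) m)
            = (\<Sum>m\<in>M. (cmod (Kf F G m u))\<^sup>2)"
      proof -
        have ee: "real_of_int m * (- x\<^sup>2 - (u - x)\<^sup>2) = - (real_of_int m * (x\<^sup>2 + (u - x)\<^sup>2))" for m x
          by (simp add: algebra_simps)
        show ?thesis by (simp add: Kf_def Psi_def h_def q_def ee)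
      qed
    qed
    finally show ?thesis by (simp add: h_def)
  qed
qed simp

lemma Kf2_integrable: "integrable lborel (\<lambda>u. (cmod (Kf F G m u))\<^sup>2)"
  by (rule integrable_bounded_support[where C="(BF * BG)\<^sup>2" and a=4 and b=6])
     (auto simp: Kf_zero intro!: power_mono Kf_bound)

lemma FG2_integrable: "integrable lborel (\<lambda>x. (cmod (F x * G (u - x)))\<^sup>2)"
  by (rule integrable_bounded_support[where C="(BF * BG)\<^sup>2" and a=0 and b=1])
     (auto simp: Fs norm_mult intro!: power_mono mult_mono FB GB BF0 BG0)

lemma two_five: "(2::ennreal) * ennreal (5 / 2) = 5"
proof -
  have "(2::ennreal) * ennreal (5 / 2) = ennreal (2 * (5 / 2))"
    by (subst ennreal_mult) auto
  then show ?thesis by simp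
qed

lemma main_bound:
  "(\<integral>\<^sup>+m. \<integral>\<^sup>+n. ennreal ((cmod (ca F n m * ca G n m))\<^sup>2) \<partial>count_space UNIV \<partial>count_space UNIV)
    \<le> 5 * (\<integral>\<^sup>+x. ennreal ((cmod (F x))\<^sup>2) \<partial>lborel) * (\<integral>\<^sup>+x. ennreal ((cmod (G x))\<^sup>2) \<partial>lborel)"
proof -
  have K2: "ennreal (2 * (LINT u|lborel. (cmod (Kf F G m u))\<^sup>2)) = 2 * (\<integral>\<^sup>+u. ennreal ((cmod (Kf F G m u))\<^sup>2) \<partial>lborel)" for m
  proof -
    have "ennreal (2 * (LINT u|lborel. (cmod (Kf F G m u))\<^sup>2)) = ennreal 2 * ennreal (LINT u|lborel. (cmod (Kf F G m u))\<^sup>2)"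
      by (rule ennreal_mult) auto
    also have "ennreal (LINT u|lborel. (cmod (Kf F G m u))\<^sup>2) = (\<integral>\<^sup>+u. ennreal ((cmod (Kf F G m u))\<^sup>2) \<partial>lborel)"
      by (rule nn_integral_eq_integral[symmetric]) (auto intro: Kf2_integrable)
    finally show ?thesis by simp
  qed
  have FG: "ennreal (5 / 2 * (LINT x|lborel. (cmod (F x * G (u - x)))\<^sup>2))
      = ennreal (5 / 2) * (\<integral>\<^sup>+x. ennreal ((cmod (F x))\<^sup>2) * ennreal ((cmod (G (u - x)))\<^sup>2) \<partial>lborel)" for u
  proof -
    have "ennreal (5 / 2 * (LINT x|lborel. (cmod (F x * G (u - x)))\<^sup>2)) = ennreal (5 / 2) * ennreal (LINT x|lborel. (cmod (F x * G (u - x)))\<^sup>2)"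
      by (rule ennreal_mult) auto
    also have "ennreal (LINT x|lborel. (cmod (F x * G (u - x)))\<^sup>2) = (\<integral>\<^sup>+x. ennreal ((cmod (F x * G (u - x)))\<^sup>2) \<partial>lborel)"
      by (rule nn_integral_eq_integral[symmetric]) (auto intro: FG2_integrable)
    also have "\<dots> = (\<integral>\<^sup>+x. ennreal ((cmod (F x))\<^sup>2) * ennreal ((cmod (G (u - x)))\<^sup>2) \<partial>lborel)"
      by (intro nn_integral_cong) (simp add: norm_mult power_mult_distrib ennreal_mult)
    finally show ?thesis .
  qed
  have shift: "(\<integral>\<^sup>+u. ennreal ((cmod (G (u - x)))\<^sup>2) \<partial>lborel) = (\<integral>\<^sup>+y. ennreal ((cmod (G y))\<^sup>2) \<partial>lborel)" for x
    using nn_integral_real_affine[where c=1 and t="-x" and f="\<lambda>y. ennreal ((cmod (G y))\<^sup>2)"] by simp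
  have inner: "(\<integral>\<^sup>+m. \<integral>\<^sup>+u. ennreal ((cmod (Kf F G m u))\<^sup>2) \<partial>lborel \<partial>count_space UNIV)
      \<le> ennreal (5 / 2) * ((\<integral>\<^sup>+x. ennreal ((cmod (F x))\<^sup>2) \<partial>lborel) * (\<integral>\<^sup>+y. ennreal ((cmod (G y))\<^sup>2) \<partial>lborel))"
  proof -
    have "(\<integral>\<^sup>+m. \<integral>\<^sup>+u. ennreal ((cmod (Kf F G m u))\<^sup>2) \<partial>lborel \<partial>count_space UNIV)
      = (\<integral>\<^sup>+u. \<integral>\<^sup>+m. ennreal ((cmod (Kf F G m u))\<^sup>2) \<partial>count_space UNIV \<partial>lborel)"
      by (rule nn_integral_count_space_nn_integral[symmetric]) auto
    also have "\<dots> \<le> (\<integral>\<^sup>+u. ennreal (5 / 2) * (\<integral>\<^sup>+x. ennreal ((cmod (F x))\<^sup>2) * ennreal ((cmod (G (u - x)))\<^sup>2) \<partial>lborel) \<partial>lborel)"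
      by (intro nn_integral_mono) (simp only: FG[symmetric] sum_m_bound)
    also have "\<dots> = ennreal (5 / 2) * (\<integral>\<^sup>+u. \<integral>\<^sup>+x. ennreal ((cmod (F x))\<^sup>2) * ennreal ((cmod (G (u - x)))\<^sup>2) \<partial>lborel \<partial>lborel)"
      by (rule nn_integral_cmult) measurable
    also have "(\<integral>\<^sup>+u. \<integral>\<^sup>+x. ennreal ((cmod (F x))\<^sup>2) * ennreal ((cmod (G (u - x)))\<^sup>2) \<partial>lborel \<partial>lborel)
        = (\<integral>\<^sup>+x. \<integral>\<^sup>+u. ennreal ((cmod (F x))\<^sup>2) * ennreal ((cmod (G (u - x)))\<^sup>2) \<partial>lborel \<partial>lborel)"
      by (rule lborel_pair.Fubini') measurable
    also have "\<dots> = (\<integral>\<^sup>+x. ennreal ((cmod (F x))\<^sup>2) * (\<integral>\<^sup>+y. ennreal ((cmod (G y))\<^sup>2) \<partial>lborel) \<partial>lborel)"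
      by (intro nn_integral_cong) (simp add: nn_integral_cmult shift)
    also have "\<dots> = (\<integral>\<^sup>+x. ennreal ((cmod (F x))\<^sup>2) \<partial>lborel) * (\<integral>\<^sup>+y. ennreal ((cmod (G y))\<^sup>2) \<partial>lborel)"
      by (rule nn_integral_multc) measurable
    finally show ?thesis .
  qed
  have "(\<integral>\<^sup>+m. \<integral>\<^sup>+n. ennreal ((cmod (ca F n m * ca G n m))\<^sup>2) \<partial>count_space UNIV \<partial>count_space UNIV)
      \<le> (\<integral>\<^sup>+m. 2 * (\<integral>\<^sup>+u. ennreal ((cmod (Kf F G m u))\<^sup>2) \<partial>lborel) \<partial>count_space UNIV)"
    by (intro nn_integral_mono) (simp only: K2[symmetric] sum_n_bound)
  also have "\<dots> = 2 * (\<integral>\<^sup>+m. \<integral>\<^sup>+u. ennreal ((cmod (Kf F G m u))\<^sup>2) \<partial>lborel \<partial>count_space UNIV)"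
    by (rule nn_integral_cmult) simp
  also have "\<dots> \<le> 2 * (ennreal (5 / 2) * ((\<integral>\<^sup>+x. ennreal ((cmod (F x))\<^sup>2) \<partial>lborel) * (\<integral>\<^sup>+y. ennreal ((cmod (G y))\<^sup>2) \<partial>lborel)))"
    by (rule mult_left_mono[OF inner]) simp
  also have "\<dots> = 5 * (\<integral>\<^sup>+x. ennreal ((cmod (F x))\<^sup>2) \<partial>lborel) * (\<integral>\<^sup>+y. ennreal ((cmod (G y))\<^sup>2) \<partial>lborel)"
    by (simp only: two_five mult.assoc[symmetric])
  finally show ?thesis .
qed
end



lemma floor_nn:
  fixes \<phi> :: "int \<Rightarrow> ennreal"
  shows "(\<integral>\<^sup>+t. \<phi> \<lfloor>t::real\<rfloor> \<partial>lborel) = (\<integral>\<^sup>+m. \<phi> m \<partial>count_space UNIV)"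
proof -
  have pt: "\<phi> \<lfloor>t\<rfloor> = (\<integral>\<^sup>+m. \<phi> m * indicator {real_of_int m..<real_of_int m + 1} t \<partial>count_space UNIV)" for t :: real
  proof -
    have "(\<integral>\<^sup>+m. \<phi> m * indicator {real_of_int m..<real_of_int m + 1} t \<partial>count_space UNIV)
        = (\<Sum>m\<in>{\<lfloor>t\<rfloor>}. \<phi> m * indicator {real_of_int m..<real_of_int m + 1} t)"
    proof (rule nn_integral_count_space')
      fix m :: int assume "m \<notin> {\<lfloor>t\<rfloor>}"
      then have "\<lfloor>t\<rfloor> \<noteq> m" by simp
      then have "t \<notin> {real_of_int m..<real_of_int m + 1}" by (auto simp: floor_eq_iff)
      then show "\<phi> m * indicator {real_of_int m..<real_of_int m + 1} t = 0" by simp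
    qed auto
    also have "\<dots> = \<phi> \<lfloor>t\<rfloor>"
      by (simp add: indicator_def)
    finally show ?thesis by simp
  qed
  have "(\<integral>\<^sup>+t. \<phi> \<lfloor>t::real\<rfloor> \<partial>lborel) =
        (\<integral>\<^sup>+t. \<integral>\<^sup>+m. \<phi> m * indicator {real_of_int m..<real_of_int m + 1} t \<partial>count_space UNIV \<partial>lborel)"
    by (simp only: pt[symmetric])
  also have "\<dots> = (\<integral>\<^sup>+m. \<integral>\<^sup>+t. \<phi> m * indicator {real_of_int m..<real_of_int m + 1} t \<partial>lborel \<partial>count_space UNIV)"
    by (rule nn_integral_count_space_nn_integral) auto
  also have "\<dots> = (\<integral>\<^sup>+m. \<phi> m \<partial>count_space UNIV)"
    by (intro nn_integral_cong) (simp add: nn_integral_cmult_indicator)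
  finally show ?thesis .
qed


lemma pair_on_ca:
  assumes cf: "continuous_on {a..b} f" and phi: "\<forall>x\<in>{a..b}. \<phi> x = 1"
  shows "pair_on a b f (modul \<phi> n m) = ca (\<lambda>x. indicator {a..b} x *\<^sub>R f x) n m"
proof -
  have cnj_eq: "cnj (modul \<phi> n m x) = ex (- (of_int n * x + of_int m * x\<^sup>2))" if "x \<in> {a..b}" for x
  proof -
    have "modul \<phi> n m x = \<phi> x * ex (of_int n * x) * ex (of_int m * x\<^sup>2)"
      unfolding modul_def ex_def by simp
    also have "\<dots> = ex (of_int n * x) * ex (of_int m * x\<^sup>2)"
      using phi that by simp
    finally have "cnj (modul \<phi> n m x) = ex (- (of_int n * x)) * ex (- (of_int m * x\<^sup>2))"
      by (simp add: ex_minus)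
    also have "\<dots> = ex (- (of_int n * x + of_int m * x\<^sup>2))"
      by (simp add: ex_add[symmetric])
    finally show ?thesis .
  qed
  have ce: "continuous_on {a..b} (\<lambda>x. f x * ex (- (of_int n * x + of_int m * x\<^sup>2)))"
    by (intro continuous_intros cf continuous_on_compose2[OF continuous_ex]) auto
  have "pair_on a b f (modul \<phi> n m) = integral {a..b} (\<lambda>x. f x * ex (- (of_int n * x + of_int m * x\<^sup>2)))"
    unfolding pair_on_def by (rule Henstock_Kurzweil_Integration.integral_cong) (simp add: cnj_eq)
  also have "\<dots> = set_lebesgue_integral lborel {a..b} (\<lambda>x. f x * ex (- (of_int n * x + of_int m * x\<^sup>2)))"
    by (rule set_borel_integral_eq_integral(2)[symmetric]) (rule borel_integrable_atLeastAtMost'[OF ce])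
  also have "\<dots> = ca (\<lambda>x. indicator {a..b} x *\<^sub>R f x) n m"
    unfolding set_lebesgue_integral_def ca_def by simp
  finally show ?thesis .
qed

lemma ME21_eq:
  "ME21 \<phi>1 \<phi>2 f g (x, t) = pair_on 0 1 f (modul \<phi>1 \<lfloor>x\<rfloor> \<lfloor>t\<rfloor>) * pair_on 4 5 g (modul \<phi>2 \<lfloor>x\<rfloor> \<lfloor>t\<rfloor>)"
proof -
  have chi_eq: "chi n y = (if \<lfloor>y\<rfloor> = n then 1 else 0)" for n y
    unfolding chi_def by (simp add: floor_eq_iff)
  have "ME21 \<phi>1 \<phi>2 f g (x, t) = infsum (\<lambda>(n, m). pair_on 0 1 f (modul \<phi>1 n m) * pair_on 4 5 g (modul \<phi>2 n m) * chi n x * chi m t) {(\<lfloor>x\<rfloor>, \<lfloor>t\<rfloor>)}"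
    unfolding ME21_def case_prod_conv
    by (rule infsum_cong_neutral) (auto simp: chi_eq split: prod.splits)
  also have "\<dots> = pair_on 0 1 f (modul \<phi>1 \<lfloor>x\<rfloor> \<lfloor>t\<rfloor>) * pair_on 4 5 g (modul \<phi>2 \<lfloor>x\<rfloor> \<lfloor>t\<rfloor>)"
    by (simp add: chi_eq)
  finally show ?thesis .
qed


lemma floor_pair_meas:
  fixes Q :: "int \<Rightarrow> int \<Rightarrow> ennreal"
  shows "(\<lambda>z::real \<times> real. Q \<lfloor>fst z\<rfloor> \<lfloor>snd z\<rfloor>) \<in> borel_measurable (lborel \<Otimes>\<^sub>M lborel)"
proof -
  have fl: "(floor :: real \<Rightarrow> int) \<in> lborel \<rightarrow>\<^sub>M count_space (UNIV :: int set)"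
    using measurable_real_floor by simp
  have g1: "(\<lambda>z::real \<times> real. \<lfloor>fst z\<rfloor>) \<in> (lborel \<Otimes>\<^sub>M lborel) \<rightarrow>\<^sub>M count_space UNIV"
    by (rule measurable_compose[OF measurable_fst fl])
  have g2: "(\<lambda>z::real \<times> real. \<lfloor>snd z\<rfloor>) \<in> (lborel \<Otimes>\<^sub>M lborel) \<rightarrow>\<^sub>M count_space UNIV"
    by (rule measurable_compose[OF measurable_snd fl])
  have inner: "(\<lambda>z::real \<times> real. Q n \<lfloor>snd z\<rfloor>) \<in> borel_measurable (lborel \<Otimes>\<^sub>M lborel)" for n
    by (rule measurable_compose_countable'[where f="\<lambda>m z. Q n m" and I=UNIV, OF _ g2]) auto
  show ?thesis
    by (rule measurable_compose_countable'[where f="\<lambda>n z. Q n \<lfloor>snd z\<rfloor>" and I=UNIV, OF _ g1])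
       (auto intro: inner)
qed

lemma L2_sq:
  fixes f :: "real \<Rightarrow> complex"
  assumes cf: "continuous_on {a..b} f"
  shows "(\<integral>\<^sup>+x. ennreal ((cmod (indicator {a..b} x *\<^sub>R f x))\<^sup>2) \<partial>lborel) = ennreal (integral {a..b} (\<lambda>x. (cmod (f x))\<^sup>2))"
    and "integral {a..b} (\<lambda>x. (cmod (f x))\<^sup>2) \<ge> 0"
proof -
  have c2: "continuous_on {a..b} (\<lambda>x. (cmod (f x))\<^sup>2)"
    by (intro continuous_intros cf)
  have si: "set_integrable lborel {a..b} (\<lambda>x. (cmod (f x))\<^sup>2)"
    by (rule borel_integrable_atLeastAtMost'[OF c2])
  have eqi: "set_lebesgue_integral lborel {a..b} (\<lambda>x. (cmod (f x))\<^sup>2) = integral {a..b} (\<lambda>x. (cmod (f x))\<^sup>2)"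
    by (rule set_borel_integral_eq_integral(2)[OF si])
  have pt: "(cmod (indicator {a..b} x *\<^sub>R f x))\<^sup>2 = indicator {a..b} x *\<^sub>R (cmod (f x))\<^sup>2" for x :: real
    by (simp split: split_indicator)
  have "(\<integral>\<^sup>+x. ennreal ((cmod (indicator {a..b} x *\<^sub>R f x))\<^sup>2) \<partial>lborel)
      = (\<integral>\<^sup>+x. ennreal (indicator {a..b} x *\<^sub>R (cmod (f x))\<^sup>2) \<partial>lborel)"
    by (simp only: pt)
  also have "\<dots> = ennreal (LINT x|lborel. indicator {a..b} x *\<^sub>R (cmod (f x))\<^sup>2)"
    using si unfolding set_integrable_def
    by (rule nn_integral_eq_integral) (auto split: split_indicator)
  also have "\<dots> = ennreal (integral {a..b} (\<lambda>x. (cmod (f x))\<^sup>2))"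
    using eqi unfolding set_lebesgue_integral_def by simp
  finally show "(\<integral>\<^sup>+x. ennreal ((cmod (indicator {a..b} x *\<^sub>R f x))\<^sup>2) \<partial>lborel) = ennreal (integral {a..b} (\<lambda>x. (cmod (f x))\<^sup>2))" .
  have "0 \<le> (LINT x|lborel. indicator {a..b} x *\<^sub>R (cmod (f x))\<^sup>2)"
    by (rule Bochner_Integration.integral_nonneg) (auto split: split_indicator)
  moreover have "(LINT x|lborel. indicator {a..b} x *\<^sub>R (cmod (f x))\<^sup>2) = integral {a..b} (\<lambda>x. (cmod (f x))\<^sup>2)"
    using eqi unfolding set_lebesgue_integral_def .
  ultimately show "integral {a..b} (\<lambda>x. (cmod (f x))\<^sup>2) \<ge> 0"
    by linarith
qed

theorem proposition4p4:
  fixes \<phi>1 \<phi>2 :: "real \<Rightarrow> complex"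
  assumes "smooth_cc \<phi>1" and "\<forall>x\<in>{0..1}. \<phi>1 x = 1"
    and "smooth_cc \<phi>2" and "\<forall>x\<in>{4..5}. \<phi>2 x = 1"
  shows "\<exists>C::real. \<forall>f g :: real \<Rightarrow> complex.
           continuous_on {0..1} f \<longrightarrow> continuous_on {4..5} g \<longrightarrow>
           L2_R2 (ME21 \<phi>1 \<phi>2 f g) \<le> ennreal (C * L2_on 0 1 f * L2_on 4 5 g)"
proof (intro exI[of _ "sqrt 5"] allI impI)
  fix f g :: "real \<Rightarrow> complex"
  assume cf: "continuous_on {0..1} f" and cg: "continuous_on {4..5} g"
  define F where "F x = indicator {0..1} x *\<^sub>R f x" for x :: real
  define G where "G x = indicator {4..5} x *\<^sub>R g x" for x :: real
  have Fm: "F \<in> borel_measurable borel"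
    unfolding F_def[abs_def] by (rule borel_measurable_continuous_on_indicator) (auto simp: cf)
  have Gm: "G \<in> borel_measurable borel"
    unfolding G_def[abs_def] by (rule borel_measurable_continuous_on_indicator) (auto simp: cg)
  obtain BF where BF: "BF \<ge> 0" "\<And>x. x \<in> {0..1} \<Longrightarrow> norm (f x) \<le> BF"
    using continuous_on_compact_bound[OF compact_Icc cf] by blast
  obtain BG where BG: "BG \<ge> 0" "\<And>x. x \<in> {4..5} \<Longrightarrow> norm (g x) \<le> BG"
    using continuous_on_compact_bound[OF compact_Icc cg] by blast
  have FB: "cmod (F x) \<le> BF" for x
    using BF unfolding F_def by (auto split: split_indicator)
  have GB: "cmod (G x) \<le> BG" for x
    using BG unfolding G_def by (auto split: split_indicator)
  have Fs: "x \<notin> {0..1} \<Longrightarrow> F x = 0" for x unfolding F_def by simp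
  have Gs: "x \<notin> {4..5} \<Longrightarrow> G x = 0" for x unfolding G_def by simp
  have P1: "pair_on 0 1 f (modul \<phi>1 n m) = ca F n m" for n m
    unfolding F_def[abs_def] by (rule pair_on_ca[OF cf assms(2)])
  have P2: "pair_on 4 5 g (modul \<phi>2 n m) = ca G n m" for n m
    unfolding G_def[abs_def] by (rule pair_on_ca[OF cg assms(4)])
  define Q where "Q n m = ennreal ((cmod (ca F n m * ca G n m))\<^sup>2)" for n m
  define A where "A = integral {0..1} (\<lambda>x. (cmod (f x))\<^sup>2)"
  define B where "B = integral {4..5} (\<lambda>x. (cmod (g x))\<^sup>2)"
  have XA: "(\<integral>\<^sup>+x. ennreal ((cmod (F x))\<^sup>2) \<partial>lborel) = ennreal A" "A \<ge> 0"
    unfolding F_def A_def using L2_sq[OF cf] by auto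
  have YB: "(\<integral>\<^sup>+x. ennreal ((cmod (G x))\<^sup>2) \<partial>lborel) = ennreal B" "B \<ge> 0"
    unfolding G_def B_def using L2_sq[OF cg] by auto
  define I where "I = (\<integral>\<^sup>+z. ennreal ((cmod (ME21 \<phi>1 \<phi>2 f g z))\<^sup>2) \<partial>lborel)"
  have "I = integral\<^sup>N (lborel \<Otimes>\<^sub>M lborel) (\<lambda>z::real \<times> real. Q \<lfloor>fst z\<rfloor> \<lfloor>snd z\<rfloor>)"
    unfolding I_def lborel_prod
    by (intro nn_integral_cong) (auto simp: ME21_eq P1 P2 Q_def)
  also have "\<dots> = (\<integral>\<^sup>+x. \<integral>\<^sup>+t. Q \<lfloor>x::real\<rfloor> \<lfloor>t::real\<rfloor> \<partial>lborel \<partial>lborel)"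
    using lborel.nn_integral_fst[OF floor_pair_meas[of Q]] by simp
  also have "\<dots> = (\<integral>\<^sup>+x. \<integral>\<^sup>+m. Q \<lfloor>x::real\<rfloor> m \<partial>count_space UNIV \<partial>lborel)"
    by (simp only: floor_nn)
  also have "\<dots> = (\<integral>\<^sup>+n. \<integral>\<^sup>+m. Q n m \<partial>count_space UNIV \<partial>count_space UNIV)"
    by (rule floor_nn[where \<phi>="\<lambda>n. \<integral>\<^sup>+m. Q n m \<partial>count_space UNIV"])
  also have "\<dots> = (\<integral>\<^sup>+m. \<integral>\<^sup>+n. Q n m \<partial>count_space UNIV \<partial>count_space UNIV)"
    by (rule nn_integral_count_space_nn_integral) auto
  also have "\<dots> \<le> 5 * ennreal A * ennreal B"
    unfolding Q_def using main_bound[OF Fm Gm FB GB Fs Gs] XA YB by simp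
  also have "\<dots> = ennreal (5 * A * B)"
    using XA YB by (simp add: ennreal_mult)
  finally have Ile: "I \<le> ennreal (5 * A * B)" .
  then have Ifin: "I \<noteq> \<infinity>" by (auto simp: top_unique)
  have AB: "0 \<le> 5 * A * B" using XA YB by simp
  have "sqrt (enn2real I) \<le> sqrt (5 * A * B)"
    by (rule real_sqrt_le_mono) (rule enn2real_leI[OF AB Ile])
  also have "\<dots> = sqrt 5 * L2_on 0 1 f * L2_on 4 5 g"
    unfolding L2_on_def A_def B_def by (simp add: real_sqrt_mult)
  finally have "ennreal (sqrt (enn2real I)) \<le> ennreal (sqrt 5 * L2_on 0 1 f * L2_on 4 5 g)"
    by (rule ennreal_leI)
  then show "L2_R2 (ME21 \<phi>1 \<phi>2 f g) \<le> ennreal (sqrt 5 * L2_on 0 1 f * L2_on 4 5 g)"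
    unfolding L2_R2_def Let_def I_def[symmetric] using Ifin by simp
qed

end
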